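(* Let $\chi:\mathrm{SO}_n\to\mathfrak{so}_n$ be smooth with $\chi(gAg^T)=g\chi(A)g^T$ for all $A,g\in\mathrm{SO}_n$. Then: (i) there exists a $2\pi$-periodic $\tau=(\tau_k)_{k=1}^p:\mathcal T\to\mathbb R^p$ with $\chi(A_\Theta)=\sum_{k=1}^p\tau_k(\Theta)F_{2k-1\,2k}$ for all $\Theta\in\mathcal T$, and $\tau\circ W=W\circ\tau$ for all $W\in\mathfrak W$; (ii) for every $A\in\mathrm{SO}_n$ and every $(g,\Theta)\in\mathrm{SO}_n\times\mathcal T$ with $A=gA_\Theta g^T$, $\chi(A)=\sum_{k=1}^p\tau_k(\Theta)\,gF_{2k-1\,2k}g^T$.
   Context: Let $n\ge3$, $\mathrm{SO}_n$ the rotation group, $\mathfrak{so}_n$ the skew-symmetric matrices; $F_{ij}\in\mathfrak{so}_n$ has entries $(F_{ij})_{k\ell}=\delta_{ik}\delta_{j\ell}-\delta_{i\ell}\delta_{jk}$. $p=\lfloor n/2\rfloor$; $\mathcal T=[-\pi,\pi)^p$ viewed as the torus. $R_\theta=\begin{pmatrix}\cos\theta&-\sin\theta\\\sin\theta&\cos\theta\end{pmatrix}$; for $\Theta=(\theta_1,\dots,\theta_p)$, $A_\Theta$ is block diagonal with blocks $R_{\theta_1},\dots,R_{\theta_p}$ (and a final entry $1$ if $n=2p+1$). The Weyl group $\mathfrak W$ acts linearly on $\mathbb R^p$: for $n=2p$ it is generated by coordinate transpositions $\theta_i\leftrightarrow\theta_j$ and sign changes of pairs $(\theta_i,\theta_j)\mapsto(-\theta_i,-\theta_j)$,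 $i<j$; for $n=2p+1$ by coordinate transpositions and single sign changes $\theta_i\mapsto-\theta_i$. *)

theory Defs
  imports "HOL-Analysis.Analysis"
begin

type_synonym 'n rmat = "((real, 'n) vec, 'n) vec"

text \<open>The dimension n is CARD('n); the basis is ordered by the enumeration of the
  index type 'n: position k (0-based) corresponds to the basis vector e_(k+1).\<close>

definition pos :: "'n::enum \<Rightarrow> nat" where
  "pos x = (LEAST k. k < length (Enum.enum :: 'n list) \<and> Enum.enum ! k = x)"

definition SO_mat :: "('n::finite rmat) set" where
  "SO_mat = {A. rotation_matrix A}"

definition so_mat :: "('n::finite rmat) set" where
  "so_mat = {X. transpose X = - X}"

text \<open>F_ij with 0-based indices i j: (F_ij)_kl = d_ik d_jl - d_il d_jk.
  The paper's F_(2k-1,2k) (1-based, k = 1..p) is Fmat (2k) (2k+1) here with k = 0..p-1.\<close>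
definition Fmat :: "nat \<Rightarrow> nat \<Rightarrow> ('n::enum) rmat" where
  "Fmat i j = (\<chi> r c. (if pos r = i \<and> pos c = j then 1 else 0)
                      - (if pos r = j \<and> pos c = i then 1 else 0))"

text \<open>Angle vectors Theta in R^p are represented as functions nat => real vanishing
  outside {..<p}.\<close>
definition angvecs :: "nat \<Rightarrow> (nat \<Rightarrow> real) set" where
  "angvecs p = {\<Theta>. \<forall>k\<ge>p. \<Theta> k = 0}"

definition torus :: "nat \<Rightarrow> (nat \<Rightarrow> real) set" where
  "torus p = {\<Theta> \<in> angvecs p. \<forall>k<p. -pi \<le> \<Theta> k \<and> \<Theta> k < pi}"

text \<open>Entries of the block diagonal matrix A_Theta (0-based indices); block k occupies
  rows/columns 2k, 2k+1 for k < p; the remaining diagonal entry (n odd) is 1.\<close>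
definition rot_entry :: "nat \<Rightarrow> (nat \<Rightarrow> real) \<Rightarrow> nat \<Rightarrow> nat \<Rightarrow> real" where
  "rot_entry p \<Theta> i j =
     (if i div 2 = j div 2 \<and> i div 2 < p then
        (let k = i div 2 in
          if i = j then cos (\<Theta> k)
          else if i = 2*k \<and> j = 2*k+1 then - sin (\<Theta> k)
          else sin (\<Theta> k))
      else if i = j then 1 else 0)"

definition A_rot :: "(nat \<Rightarrow> real) \<Rightarrow> ('n::enum) rmat" where
  "A_rot \<Theta> = (\<chi> r c. rot_entry (CARD('n) div 2) \<Theta> (pos r) (pos c))"

definition swap_coords :: "nat \<Rightarrow> nat \<Rightarrow> (nat \<Rightarrow> real) \<Rightarrow> (nat \<Rightarrow> real)" where
  "swap_coords i j \<Theta> = (\<lambda>k. if k = i then \<Theta> j else if k = j then \<Theta> i else \<Theta> k)"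

definition sign1 :: "nat \<Rightarrow> (nat \<Rightarrow> real) \<Rightarrow> (nat \<Rightarrow> real)" where
  "sign1 i \<Theta> = (\<lambda>k. if k = i then - \<Theta> k else \<Theta> k)"

definition sign2 :: "nat \<Rightarrow> nat \<Rightarrow> (nat \<Rightarrow> real) \<Rightarrow> (nat \<Rightarrow> real)" where
  "sign2 i j \<Theta> = (\<lambda>k. if k = i \<or> k = j then - \<Theta> k else \<Theta> k)"

definition weyl_gens :: "nat \<Rightarrow> ((nat \<Rightarrow> real) \<Rightarrow> (nat \<Rightarrow> real)) set" where
  "weyl_gens n =
     {swap_coords i j | i j. i < j \<and> j < n div 2} \<union>
     (if even n then {sign2 i j | i j. i < j \<and> j < n div 2}
      else {sign1 i | i. i < n div 2})"

text \<open>The group generated by the generators (they are involutions and the group is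
  finite, so closure under composition with generators gives the generated group).\<close>
inductive_set weyl_group :: "nat \<Rightarrow> ((nat \<Rightarrow> real) \<Rightarrow> (nat \<Rightarrow> real)) set" for n where
  weyl_id: "id \<in> weyl_group n"
| weyl_comp: "W \<in> weyl_group n \<Longrightarrow> G \<in> weyl_gens n \<Longrightarrow> G \<circ> W \<in> weyl_group n"

fun Ck_on :: "nat \<Rightarrow> 'a::real_normed_vector set \<Rightarrow> ('a \<Rightarrow> 'b::real_normed_vector) \<Rightarrow> bool" where
  "Ck_on 0 U f = continuous_on U f"
| "Ck_on (Suc k) U f =
     (\<exists>f'. (\<forall>x\<in>U. (f has_derivative f' x) (at x)) \<and> (\<forall>v. Ck_on k U (\<lambda>x. f' x v)))"

definition smooth_on_open :: "'a::real_normed_vector set \<Rightarrow> ('a \<Rightarrow> 'b::real_normed_vector) \<Rightarrow> bool" where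
  "smooth_on_open U f \<longleftrightarrow> open U \<and> (\<forall>k. Ck_on k U f)"

definition smooth_on_set :: "'a::real_normed_vector set \<Rightarrow> ('a \<Rightarrow> 'b::real_normed_vector) \<Rightarrow> bool" where
  "smooth_on_set S f \<longleftrightarrow> (\<exists>U F. S \<subseteq> U \<and> smooth_on_open U F \<and> (\<forall>x\<in>S. F x = f x))"

end

theory Submission
  imports Defs "HOL-Analysis.Analysis"
begin


definition ix :: "nat \<Rightarrow> 'n::enum" where "ix m = Enum.enum ! m"

lemma len_enum: "length (Enum.enum :: 'n::enum list) = CARD('n)"
  by (simp add: card_UNIV_length_enum)

lemma pos_props: "pos (x::'n::enum) < CARD('n) \<and> ix (pos x) = x"
proof -
  have "x \<in> set (Enum.enum :: 'n list)" by (simp add: UNIV_enum[symmetric])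
  then obtain k where k: "k < length (Enum.enum :: 'n list) \<and> Enum.enum ! k = x"
    by (metis in_set_conv_nth)
  have "pos x < length (Enum.enum :: 'n list) \<and> Enum.enum ! pos x = x"
    unfolding pos_def by (rule LeastI[of _ k], rule k)
  thus ?thesis by (simp add: len_enum ix_def)
qed

lemma pos_lt[simp]: "pos (x::'n::enum) < CARD('n)" using pos_props by blast
lemma ix_pos[simp]: "ix (pos (x::'n::enum)) = x" using pos_props by blast

lemma pos_ix[simp]: "m < CARD('n::enum) \<Longrightarrow> pos (ix m :: 'n) = m"
proof -
  assume m: "m < CARD('n)"
  have d: "distinct (Enum.enum :: 'n list)" by (rule enum_distinct)
  show ?thesis unfolding pos_def ix_def
  proof (rule Least_equality)
    show "m < length (Enum.enum :: 'n list) \<and> Enum.enum ! m = (Enum.enum ! m :: 'n)"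
      using m by (simp add: len_enum)
  next
    fix y assume "y < length (Enum.enum :: 'n list) \<and> Enum.enum ! y = (Enum.enum ! m :: 'n)"
    then show "m \<le> y" using d m len_enum nth_eq_iff_index_eq by (metis order.refl)
  qed
qed

lemma ix_inj: "a < CARD('n::enum) \<Longrightarrow> b < CARD('n) \<Longrightarrow> (ix a :: 'n) = ix b \<longleftrightarrow> a = b"
  by (metis pos_ix)

lemma pos_inj: "pos (x::'n::enum) = pos y \<longleftrightarrow> x = y"
  by (metis ix_pos)

lemma bij_ix: "bij_betw (ix :: nat \<Rightarrow> 'n::enum) {..<CARD('n)} UNIV"
  unfolding bij_betw_def inj_on_def
  by (auto simp: ix_inj) (metis ix_pos pos_lt image_eqI lessThan_iff)

lemma sum_UNIV_ix: "(\<Sum>r\<in>UNIV. f r) = (\<Sum>a<CARD('n::enum). f (ix a :: 'n))"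
  by (rule sum.reindex_bij_betw[OF bij_ix, symmetric])

definition nm :: "('n::enum) rmat \<Rightarrow> nat \<Rightarrow> nat \<Rightarrow> real" where
  "nm M i j = M $ ix i $ ix j"

lemma mat_eqI: "(\<And>i j. i < CARD('n) \<Longrightarrow> j < CARD('n) \<Longrightarrow> nm M i j = nm N i j) \<Longrightarrow> M = (N::'n::enum rmat)"
  unfolding nm_def vec_eq_iff by (metis ix_pos pos_lt)

lemma nm_mult: "nm (M ** N) i j = (\<Sum>a<CARD('n::enum). nm M i a * nm (N::'n rmat) a j)"
  unfolding nm_def matrix_matrix_mult_def by (simp add: sum_UNIV_ix)

lemma nm_transpose[simp]: "nm (transpose M) i j = nm M j i"
  unfolding nm_def transpose_def by simp

lemma nm_mat1: "i < CARD('n::enum) \<Longrightarrow> j < CARD('n) \<Longrightarrow> nm (mat 1 :: 'n rmat) i j = (if i = j then 1 else 0)"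
  unfolding nm_def mat_def by (simp add: ix_inj)

lemma nm_scale[simp]: "nm (c *\<^sub>R M) i j = c * nm M i j"
  unfolding nm_def by simp

lemma nm_sum: "nm (\<Sum>k\<in>S. f k) i j = (\<Sum>k\<in>S. nm (f k) i j)"
  unfolding nm_def by (induction S rule: infinite_finite_induct) auto

lemma nm_uminus[simp]: "nm (- M) i j = - nm M i j"
  unfolding nm_def by simp

lemma nm_Arot: "i < CARD('n::enum) \<Longrightarrow> j < CARD('n) \<Longrightarrow>
   nm (A_rot \<Theta> :: 'n rmat) i j = rot_entry (CARD('n) div 2) \<Theta> i j"
  unfolding nm_def A_rot_def by simp

lemma nm_Fmat: "i < CARD('n::enum) \<Longrightarrow> j < CARD('n) \<Longrightarrow>
   nm (Fmat k l :: 'n rmat) i j = (if i = k \<and> j = l then 1 else 0) - (if i = l \<and> j = k then 1 else 0)"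
  unfolding nm_def Fmat_def by simp



lemma rot_blk:
  assumes "q < p"
  shows "rot_entry p \<Theta> (2*q) (2*q) = cos (\<Theta> q)"
    "rot_entry p \<Theta> (2*q) (2*q+1) = - sin (\<Theta> q)"
    "rot_entry p \<Theta> (2*q+1) (2*q) = sin (\<Theta> q)"
    "rot_entry p \<Theta> (2*q+1) (2*q+1) = cos (\<Theta> q)"
  using assms by (simp_all add: rot_entry_def)

lemma rot_zero_off: "i div 2 \<noteq> j div 2 \<Longrightarrow> rot_entry p \<Theta> i j = 0"
  by (auto simp: rot_entry_def)

lemma rot_mult:
  assumes p: "p = n div 2" and i: "i < n" and j: "j < n"
  shows "(\<Sum>a<n. rot_entry p \<Theta> i a * rot_entry p \<Phi> a j) = rot_entry p (\<lambda>k. \<Theta> k + \<Phi> k) i j"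
proof (cases "i div 2 < p")
  case True
  define q where "q = i div 2"
  have qn: "2*q+1 < n" using True p q_def by linarith
  have "(\<Sum>a<n. rot_entry p \<Theta> i a * rot_entry p \<Phi> a j) = (\<Sum>a\<in>{2*q, 2*q+1}. rot_entry p \<Theta> i a * rot_entry p \<Phi> a j)"
  proof (rule sum.mono_neutral_right)
    show "{2*q, 2*q+1} \<subseteq> {..<n}" using qn by auto
    show "\<forall>a\<in>{..<n} - {2*q, 2*q+1}. rot_entry p \<Theta> i a * rot_entry p \<Phi> a j = 0"
    proof
      fix a assume "a \<in> {..<n} - {2*q, 2*q+1}"
      then have "a div 2 \<noteq> i div 2" unfolding q_def by auto
      then show "rot_entry p \<Theta> i a * rot_entry p \<Phi> a j = 0" by (simp add: rot_zero_off)
    qed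
  qed simp
  also have "\<dots> = rot_entry p \<Theta> i (2*q) * rot_entry p \<Phi> (2*q) j + rot_entry p \<Theta> i (2*q+1) * rot_entry p \<Phi> (2*q+1) j"
    by simp
  also have "\<dots> = rot_entry p (\<lambda>k. \<Theta> k + \<Phi> k) i j"
  proof (cases "j div 2 = q")
    case True
    have iq: "i = 2*q \<or> i = 2*q+1" unfolding q_def by auto
    have jq: "j = 2*q \<or> j = 2*q+1" using True by auto
    have qp: "q < p" using \<open>i div 2 < p\<close> q_def by simp
    from iq jq show ?thesis
    proof (elim disjE)
      assume "i = 2*q" "j = 2*q" then show ?thesis
        using qp by (simp only: rot_blk) (simp add: cos_add algebra_simps)
    next
      assume "i = 2*q" "j = 2*q+1" then show ?thesis
        using qp by (simp only: rot_blk) (simp add: sin_add algebra_simps)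
    next
      assume "i = 2*q+1" "j = 2*q" then show ?thesis
        using qp by (simp only: rot_blk) (simp add: sin_add algebra_simps)
    next
      assume "i = 2*q+1" "j = 2*q+1" then show ?thesis
        using qp by (simp only: rot_blk) (simp add: cos_add algebra_simps)
    qed
  next
    case False
    then have "j \<noteq> 2*q" "j \<noteq> 2*q+1" by auto
    moreover have "i div 2 \<noteq> j div 2" using False q_def by simp
    ultimately show ?thesis using False by (simp add: rot_zero_off)
  qed
  finally show ?thesis .
next
  case False
  have f: "\<And>\<Psi> a. rot_entry p \<Psi> i a = (if i = a then 1 else 0)"
    using False by (auto simp: rot_entry_def)
  have "(\<Sum>a<n. rot_entry p \<Theta> i a * rot_entry p \<Phi> a j) = (\<Sum>a<n. if a = i then rot_entry p \<Phi> a j else 0)"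
    by (rule sum.cong) (auto simp: f)
  also have "\<dots> = rot_entry p \<Phi> i j" using i by simp
  also have "\<dots> = rot_entry p (\<lambda>k. \<Theta> k + \<Phi> k) i j" by (simp add: f)
  finally show ?thesis .
qed



lemma rot_transpose_nat: "rot_entry p \<Theta> j i = rot_entry p (\<lambda>k. - \<Theta> k) i j"
proof (cases "i div 2 = j div 2 \<and> i div 2 < p")
  case True
  define q where "q = i div 2"
  have qp: "q < p" using True q_def by simp
  have iq: "i = 2*q \<or> i = 2*q+1" unfolding q_def by auto
  have jq: "j = 2*q \<or> j = 2*q+1" using True q_def by auto
  from iq jq show ?thesis
  proof (elim disjE)
    assume "i = 2*q" "j = 2*q" then show ?thesis by (simp only: rot_blk[OF qp]) simp
  next
    assume "i = 2*q" "j = 2*q+1" then show ?thesis by (simp only: rot_blk[OF qp]) simp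
  next
    assume "i = 2*q+1" "j = 2*q" then show ?thesis by (simp only: rot_blk[OF qp]) simp
  next
    assume "i = 2*q+1" "j = 2*q+1" then show ?thesis by (simp only: rot_blk[OF qp]) simp
  qed
next
  case False
  then have "\<not> (j div 2 = i div 2 \<and> j div 2 < p)" by auto
  with False show ?thesis unfolding rot_entry_def by (simp only: if_False) simp
qed

lemma rot_zero_nat: "rot_entry p (\<lambda>k. 0) i j = (if i = j then 1 else 0)"
  by (simp add: rot_entry_def Let_def)

lemma Arot_mult: "A_rot \<Theta> ** A_rot \<Phi> = (A_rot (\<lambda>k. \<Theta> k + \<Phi> k) :: 'n::enum rmat)"
proof (rule mat_eqI)
  fix i j assume i: "i < CARD('n)" and j: "j < CARD('n)"
  have "nm (A_rot \<Theta> ** A_rot \<Phi> :: 'n rmat) i j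
      = (\<Sum>a<CARD('n). rot_entry (CARD('n) div 2) \<Theta> i a * rot_entry (CARD('n) div 2) \<Phi> a j)"
    unfolding nm_mult by (rule sum.cong) (auto simp: nm_Arot i j)
  also have "\<dots> = rot_entry (CARD('n) div 2) (\<lambda>k. \<Theta> k + \<Phi> k) i j"
    by (rule rot_mult[OF refl i j])
  finally show "nm (A_rot \<Theta> ** A_rot \<Phi> :: 'n rmat) i j = nm (A_rot (\<lambda>k. \<Theta> k + \<Phi> k) :: 'n rmat) i j"
    by (simp add: nm_Arot i j)
qed

lemma Arot_transpose: "transpose (A_rot \<Theta>) = (A_rot (\<lambda>k. - \<Theta> k) :: 'n::enum rmat)"
proof (rule mat_eqI)
  fix i j assume "i < CARD('n)" "j < CARD('n)"
  then show "nm (transpose (A_rot \<Theta>) :: 'n rmat) i j = nm (A_rot (\<lambda>k. - \<Theta> k) :: 'n rmat) i j"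
    by (simp only: nm_transpose nm_Arot rot_transpose_nat[of _ \<Theta> j i])
qed

lemma Arot_zero: "(A_rot (\<lambda>k. 0) :: 'n::enum rmat) = mat 1"
  by (rule mat_eqI) (simp add: nm_Arot rot_zero_nat nm_mat1)

lemma Arot_orth: "orthogonal_matrix (A_rot \<Theta> :: 'n::enum rmat)"
  unfolding orthogonal_matrix Arot_transpose Arot_mult by (simp add: Arot_zero)

lemma Arot_SO: "(A_rot \<Theta> :: 'n::enum rmat) \<in> SO_mat"
proof -
  define H where "H = (\<lambda>k. \<Theta> k / 2)"
  have "(A_rot \<Theta> :: 'n rmat) = A_rot H ** A_rot H"
    unfolding Arot_mult H_def by simp
  then have "det (A_rot \<Theta> :: 'n rmat) = det (A_rot H :: 'n rmat) * det (A_rot H :: 'n rmat)"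
    by (simp add: det_mul)
  moreover have "det (A_rot H :: 'n rmat) = 1 \<or> det (A_rot H :: 'n rmat) = -1"
    by (rule det_orthogonal_matrix[OF Arot_orth])
  ultimately have "det (A_rot \<Theta> :: 'n rmat) = 1" by auto
  then show ?thesis unfolding SO_mat_def rotation_matrix_def using Arot_orth by simp
qed



definition spm :: "(nat \<Rightarrow> nat) \<Rightarrow> (nat \<Rightarrow> real) \<Rightarrow> 'n::enum rmat" where
  "spm \<sigma> s = (\<chi> r c. if pos c = \<sigma> (pos r) then s (pos r) else 0)"

definition spm_ok :: "nat \<Rightarrow> (nat \<Rightarrow> nat) \<Rightarrow> (nat \<Rightarrow> real) \<Rightarrow> bool" where
  "spm_ok n \<sigma> s \<longleftrightarrow> (\<forall>a<n. \<sigma> a < n \<and> \<sigma> (\<sigma> a) = a \<and> s a * s a = 1)"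

lemma nm_spm: "i < CARD('n::enum) \<Longrightarrow> j < CARD('n) \<Longrightarrow>
   nm (spm \<sigma> s :: 'n rmat) i j = (if j = \<sigma> i then s i else 0)"
  unfolding nm_def spm_def by simp

lemma spm_conj:
  assumes ok: "spm_ok CARD('n::enum) \<sigma> s" and i: "i < CARD('n)" and j: "j < CARD('n)"
  shows "nm (spm \<sigma> s ** M ** transpose (spm \<sigma> s) :: 'n rmat) i j = s i * s j * nm M (\<sigma> i) (\<sigma> j)"
proof -
  have si: "\<sigma> i < CARD('n)" "\<sigma> j < CARD('n)" using ok i j unfolding spm_ok_def by auto
  have inner: "\<And>b. nm (spm \<sigma> s ** M :: 'n rmat) i b = s i * nm M (\<sigma> i) b"
  proof -
    fix b
    have "nm (spm \<sigma> s ** M :: 'n rmat) i b = (\<Sum>a<CARD('n). if a = \<sigma> i then s i * nm M (\<sigma> i) b else 0)"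
      unfolding nm_mult by (rule sum.cong) (auto simp: nm_spm i)
    also have "\<dots> = s i * nm M (\<sigma> i) b" using si by simp
    finally show "nm (spm \<sigma> s ** M :: 'n rmat) i b = s i * nm M (\<sigma> i) b" .
  qed
  have "nm (spm \<sigma> s ** M ** transpose (spm \<sigma> s) :: 'n rmat) i j
     = (\<Sum>b<CARD('n). if b = \<sigma> j then s i * nm M (\<sigma> i) (\<sigma> j) * s j else 0)"
    unfolding nm_mult[of "spm \<sigma> s ** M"] by (rule sum.cong) (auto simp: inner nm_spm j)
  also have "\<dots> = s i * s j * nm M (\<sigma> i) (\<sigma> j)" using si by simp
  finally show ?thesis .
qed

lemma spm_orth:
  assumes ok: "spm_ok CARD('n::enum) \<sigma> s"
  shows "orthogonal_matrix (spm \<sigma> s :: 'n rmat)"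
proof -
  have "spm \<sigma> s ** transpose (spm \<sigma> s) = (mat 1 :: 'n rmat)"
  proof (rule mat_eqI)
    fix i j assume i: "i < CARD('n)" and j: "j < CARD('n)"
    have si: "\<sigma> i < CARD('n)" "\<sigma> j < CARD('n)" "\<sigma> (\<sigma> i) = i" "\<sigma> (\<sigma> j) = j" "s i * s i = 1"
      using ok i j unfolding spm_ok_def by auto
    have "nm (spm \<sigma> s ** transpose (spm \<sigma> s) :: 'n rmat) i j
       = (\<Sum>c<CARD('n). if c = \<sigma> i then (if \<sigma> i = \<sigma> j then s i * s j else 0) else 0)"
      unfolding nm_mult by (rule sum.cong) (auto simp: nm_spm i j)
    also have "\<dots> = (if \<sigma> i = \<sigma> j then s i * s j else 0)" using si by simp
    also have "\<dots> = (if i = j then 1 else 0)" using si by metis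
    finally show "nm (spm \<sigma> s ** transpose (spm \<sigma> s) :: 'n rmat) i j = nm (mat 1 :: 'n rmat) i j"
      using i j by (simp add: nm_mat1)
  qed
  then show ?thesis unfolding orthogonal_matrix using matrix_left_right_inverse by blast
qed

lemma prod_UNIV_ix: "(\<Prod>r\<in>UNIV. f r) = (\<Prod>a<CARD('n::enum). f (ix a :: 'n))"
  by (rule prod.reindex_bij_betw[OF bij_ix, symmetric])

lemma spm_det:
  assumes ok: "spm_ok CARD('n::enum) \<sigma> s"
  shows "det (spm \<sigma> s :: 'n rmat) = of_int (sign (\<lambda>r::'n. ix (\<sigma> (pos r)) :: 'n)) * (\<Prod>a<CARD('n). s a)"
proof -
  define \<sigma>' where "\<sigma>' = (\<lambda>r::'n. ix (\<sigma> (pos r)) :: 'n)"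
  have lt: "\<And>r::'n. \<sigma> (pos r) < CARD('n)" using ok unfolding spm_ok_def by auto
  have inv: "\<And>r. \<sigma>' (\<sigma>' r) = r"
    unfolding \<sigma>'_def using ok lt unfolding spm_ok_def by simp
  have perm: "\<sigma>' permutes UNIV"
    by (rule bij_imp_permutes) (auto intro: involuntory_imp_bij inv)
  have zero: "(\<Prod>r\<in>UNIV. (spm \<sigma> s :: 'n rmat) $ r $ p r) = 0" if "p \<noteq> \<sigma>'" for p
  proof -
    obtain r where r: "p r \<noteq> \<sigma>' r" using \<open>p \<noteq> \<sigma>'\<close> by blast
    have "pos (p r) \<noteq> \<sigma> (pos r)"
    proof
      assume "pos (p r) = \<sigma> (pos r)"
      then have "ix (pos (p r)) = (\<sigma>' r)" unfolding \<sigma>'_def by simp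
      then show False using r by simp
    qed
    then have "(spm \<sigma> s :: 'n rmat) $ r $ p r = 0" unfolding spm_def by simp
    then show ?thesis by (meson UNIV_I finite prod_zero)
  qed
  have "det (spm \<sigma> s :: 'n rmat) = (\<Sum>p\<in>{p. p permutes (UNIV::'n set)}.
           if p = \<sigma>' then of_int (sign \<sigma>') * (\<Prod>r\<in>UNIV. (spm \<sigma> s :: 'n rmat) $ r $ \<sigma>' r) else 0)"
    unfolding det_def by (rule sum.cong) (auto simp: zero)
  also have "\<dots> = of_int (sign \<sigma>') * (\<Prod>r\<in>UNIV. (spm \<sigma> s :: 'n rmat) $ r $ \<sigma>' r)"
    using perm by simp
  also have "(\<Prod>r\<in>UNIV. (spm \<sigma> s :: 'n rmat) $ r $ \<sigma>' r) = (\<Prod>r\<in>(UNIV::'n set). s (pos r))"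
    by (simp add: spm_def \<sigma>'_def lt)
  also have "\<dots> = (\<Prod>a<CARD('n). s a)"
    by (simp add: prod_UNIV_ix)
  finally show ?thesis unfolding \<sigma>'_def .
qed



definition dsg :: "nat \<Rightarrow> nat \<Rightarrow> nat \<Rightarrow> real" where
  "dsg x y a = (if a = x then -1 else 1) * (if a = y then -1 else 1)"

lemma dsg_sq: "dsg x y a * dsg x y a = 1" by (simp add: dsg_def)

lemma spm_id_det: "spm_ok CARD('n::enum) id s \<Longrightarrow> det (spm id s :: 'n rmat) = (\<Prod>a<CARD('n). s a)"
proof -
  assume ok: "spm_ok CARD('n::enum) id s"
  have "(\<lambda>r::'n. ix (id (pos r)) :: 'n) = id" by (simp add: fun_eq_iff)
  then show ?thesis using spm_det[OF ok] by simp
qed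

lemma diag_SO:
  assumes "x \<noteq> y" "x < CARD('n::enum)" "y < CARD('n)"
  shows "(spm id (dsg x y) :: 'n rmat) \<in> SO_mat"
proof -
  have ok: "spm_ok CARD('n) id (dsg x y)" unfolding spm_ok_def by (simp add: dsg_sq)
  have "(\<Prod>a<CARD('n). dsg x y a) = (\<Prod>a<CARD('n). (if a = x then -1 else 1)) * (\<Prod>a<CARD('n). (if a = y then -1 else 1))"
    unfolding dsg_def by (rule prod.distrib)
  also have "\<dots> = 1" using assms by (simp add: prod.delta)
  finally have "det (spm id (dsg x y) :: 'n rmat) = 1" using spm_id_det[OF ok] by simp
  then show ?thesis unfolding SO_mat_def rotation_matrix_def using spm_orth[OF ok] by simp
qed

definition sw :: "nat \<Rightarrow> nat \<Rightarrow> nat \<Rightarrow> nat" where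
  "sw a b k = (if k = a then b else if k = b then a else k)"

definition swsig :: "nat \<Rightarrow> nat \<Rightarrow> nat \<Rightarrow> nat" where
  "swsig a b x = 2 * sw a b (x div 2) + x mod 2"

lemma transpose_ix: "a < CARD('n::enum) \<Longrightarrow> b < CARD('n) \<Longrightarrow> c < CARD('n) \<Longrightarrow>
  Transposition.transpose (ix a :: 'n) (ix b) (ix c) = ix (Transposition.transpose a b c)"
  by (simp add: Transposition.transpose_def ix_inj)

lemma swsig_eq: "a \<noteq> b \<Longrightarrow> swsig a b x = Transposition.transpose (2*a) (2*b) (Transposition.transpose (2*a+1) (2*b+1) x)"
proof -
  have x: "x = 2*(x div 2) + x mod 2" by simp
  assume "a \<noteq> b" then show ?thesis
  unfolding swsig_def sw_def Transposition.transpose_def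
  by (cases "x div 2 = a"; cases "x div 2 = b"; cases "x mod 2 = 0") (use x in auto)
qed

lemma swap_SO:
  assumes ab: "a < b" "b < CARD('n::enum) div 2"
  shows "(spm (swsig a b) (\<lambda>_. 1) :: 'n rmat) \<in> SO_mat"
proof -
  have "\<And>x::nat. x = 2*(x div 2) + x mod 2" by simp
  then have ok: "spm_ok CARD('n) (swsig a b) (\<lambda>_. 1)"
    unfolding spm_ok_def swsig_def sw_def using ab by auto
  define n where "n = CARD('n)"
  have lt: "2*a < n" "2*b < n" "2*a+1 < n" "2*b+1 < n" using ab n_def by auto
  have "(\<lambda>r::'n. ix (swsig a b (pos r)) :: 'n)
     = Transposition.transpose (ix (2*a)) (ix (2*b)) \<circ> Transposition.transpose (ix (2*a+1)) (ix (2*b+1))"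
  proof
    fix r :: 'n
    have pr: "pos r < n" using n_def by simp
    have t: "Transposition.transpose (2*a+1) (2*b+1) (pos r) < n"
      using pr lt by (simp add: Transposition.transpose_def)
    have "(Transposition.transpose (ix (2*a)) (ix (2*b)) \<circ> Transposition.transpose (ix (2*a+1)) (ix (2*b+1))) r
       = Transposition.transpose (ix (2*a)) (ix (2*b)) (Transposition.transpose (ix (2*a+1)) (ix (2*b+1)) (ix (pos r)))"
      by simp
    also have "\<dots> = Transposition.transpose (ix (2*a)) (ix (2*b)) (ix (Transposition.transpose (2*a+1) (2*b+1) (pos r)))"
      using lt pr unfolding n_def by (subst transpose_ix) auto
    also have "\<dots> = ix (Transposition.transpose (2*a) (2*b) (Transposition.transpose (2*a+1) (2*b+1) (pos r)))"
      using lt t unfolding n_def by (subst transpose_ix) auto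
    also have "\<dots> = ix (swsig a b (pos r))"
      using ab by (simp add: swsig_eq)
    finally show "ix (swsig a b (pos r)) = (Transposition.transpose (ix (2*a)) (ix (2*b)) \<circ> Transposition.transpose (ix (2*a+1)) (ix (2*b+1))) r" by simp
  qed
  moreover have "sign (Transposition.transpose (ix (2*a) :: 'n) (ix (2*b)) \<circ> Transposition.transpose (ix (2*a+1)) (ix (2*b+1))) = 1"
  proof -
    have "sign (Transposition.transpose (ix (2*a) :: 'n) (ix (2*b)) \<circ> Transposition.transpose (ix (2*a+1)) (ix (2*b+1)))
       = sign (Transposition.transpose (ix (2*a) :: 'n) (ix (2*b))) * sign (Transposition.transpose (ix (2*a+1) :: 'n) (ix (2*b+1)))"
      by (rule sign_compose) (rule permutation_swap_id)+
    also have "\<dots> = 1" using lt ab unfolding n_def by (simp add: sign_swap_id ix_inj)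
    finally show ?thesis .
  qed
  ultimately have "det (spm (swsig a b) (\<lambda>_. 1) :: 'n rmat) = 1"
    using spm_det[OF ok] by simp
  then show ?thesis unfolding SO_mat_def rotation_matrix_def using spm_orth[OF ok] by simp
qed



lemma rot_perm:
  assumes inj: "\<And>x y. \<phi> x = \<phi> y \<Longrightarrow> x = y" and pres: "\<And>k. \<phi> k < p \<longleftrightarrow> k < p"
    and sig: "\<And>a. \<sigma> a = 2 * \<phi> (a div 2) + a mod 2"
  shows "rot_entry p \<Theta> (\<sigma> i) (\<sigma> j) = rot_entry p (\<lambda>k. \<Theta> (\<phi> k)) i j"
proof -
  have sd: "\<And>a. \<sigma> a div 2 = \<phi> (a div 2)" "\<And>a. \<sigma> a mod 2 = a mod 2" using sig by simp_all
  show ?thesis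
  proof (cases "i div 2 = j div 2 \<and> i div 2 < p")
    case True
    define q where "q = i div 2"
    have qp: "q < p" "\<phi> q < p" using True q_def pres by auto
    have s0: "\<sigma> (2*q) = 2 * \<phi> q" and s1: "\<sigma> (2*q+1) = 2 * \<phi> q + 1" using sig by simp_all
    have iq: "i = 2*q \<or> i = 2*q+1" unfolding q_def by auto
    have jq: "j = 2*q \<or> j = 2*q+1" using True q_def by auto
    from iq jq show ?thesis
    proof (elim disjE)
      assume "i = 2*q" "j = 2*q" then show ?thesis by (simp only: s0 s1 rot_blk[OF qp(1)] rot_blk[OF qp(2)])
    next
      assume "i = 2*q" "j = 2*q+1" then show ?thesis by (simp only: s0 s1 rot_blk[OF qp(1)] rot_blk[OF qp(2)])
    next
      assume "i = 2*q+1" "j = 2*q" then show ?thesis by (simp only: s0 s1 rot_blk[OF qp(1)] rot_blk[OF qp(2)])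
    next
      assume "i = 2*q+1" "j = 2*q+1" then show ?thesis by (simp only: s0 s1 rot_blk[OF qp(1)] rot_blk[OF qp(2)])
    qed
  next
    case False
    have c: "\<not> (\<sigma> i div 2 = \<sigma> j div 2 \<and> \<sigma> i div 2 < p)"
      using False by (auto simp: sd pres dest: inj)
    have e: "\<sigma> i = \<sigma> j \<longleftrightarrow> i = j"
    proof
      assume "\<sigma> i = \<sigma> j"
      then have "i div 2 = j div 2" "i mod 2 = j mod 2" using sd by (metis inj, metis)
      then show "i = j" by (metis div_mult_mod_eq)
    qed simp
    show ?thesis using False c e unfolding rot_entry_def by (simp only: if_False)
  qed
qed

lemma rot_sign:
  assumes blk: "\<And>q. q < p \<Longrightarrow> (s (2*q) = s (2*q+1) \<and> \<Psi> q = \<Theta> q) \<or> (s (2*q) = - s (2*q+1) \<and> \<Psi> q = - \<Theta> q)"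
    and sq: "\<And>a. s a * s a = 1"
  shows "s i * s j * rot_entry p \<Theta> i j = rot_entry p \<Psi> i j"
proof (cases "i div 2 = j div 2 \<and> i div 2 < p")
  case True
  define q where "q = i div 2"
  have qp: "q < p" using True q_def by auto
  have iq: "i = 2*q \<or> i = 2*q+1" unfolding q_def by auto
  have jq: "j = 2*q \<or> j = 2*q+1" using True q_def by auto
  have s1: "s (2*q+1) * s (2*q+1) = 1" by (rule sq)
  from iq jq blk[OF qp] show ?thesis
    by (elim disjE conjE) (simp_all only: rot_blk[OF qp], simp_all add: s1 sq algebra_simps)
next
  case False
  then show ?thesis
  proof (cases "i = j")
    case True
    with sq[of i] show ?thesis unfolding rot_entry_def by (subst if_not_P[OF False])+ simp
  next
    case f2: False
    then show ?thesis unfolding rot_entry_def by (subst if_not_P[OF False])+ simp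
  qed
qed

lemma Arot_diag:
  assumes ok: "spm_ok CARD('n::enum) id s" and sq: "\<And>a. s a * s a = 1"
    and blk: "\<And>q. q < CARD('n) div 2 \<Longrightarrow> (s (2*q) = s (2*q+1) \<and> \<Psi> q = \<Theta> q) \<or> (s (2*q) = - s (2*q+1) \<and> \<Psi> q = - \<Theta> q)"
  shows "spm id s ** A_rot \<Theta> ** transpose (spm id s) = (A_rot \<Psi> :: 'n rmat)"
proof (rule mat_eqI)
  fix i j assume i: "i < CARD('n)" and j: "j < CARD('n)"
  show "nm (spm id s ** A_rot \<Theta> ** transpose (spm id s) :: 'n rmat) i j = nm (A_rot \<Psi> :: 'n rmat) i j"
    using i j by (simp add: spm_conj[OF ok] nm_Arot rot_sign[OF blk sq])
qed

lemma swap_coords_sw: "swap_coords a b f = (\<lambda>k. f (sw a b k))"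
  by (simp add: fun_eq_iff swap_coords_def sw_def)

lemma Arot_swap:
  assumes ab: "a < b" "b < CARD('n::enum) div 2"
  shows "spm (swsig a b) (\<lambda>_. 1) ** A_rot \<Theta> ** transpose (spm (swsig a b) (\<lambda>_. 1)) = (A_rot (swap_coords a b \<Theta>) :: 'n rmat)"
proof (rule mat_eqI)
  fix i j assume i: "i < CARD('n)" and j: "j < CARD('n)"
  have "\<And>x::nat. x = 2*(x div 2) + x mod 2" by simp
  then have ok: "spm_ok CARD('n) (swsig a b) (\<lambda>_. 1)"
    unfolding spm_ok_def swsig_def sw_def using ab by auto
  have lt: "swsig a b i < CARD('n)" "swsig a b j < CARD('n)" using ok i j unfolding spm_ok_def by auto
  have inj: "\<And>x y. sw a b x = sw a b y \<Longrightarrow> x = y" unfolding sw_def by (auto split: if_splits)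
  have pres: "\<And>k. sw a b k < CARD('n) div 2 \<longleftrightarrow> k < CARD('n) div 2" using ab unfolding sw_def by (auto split: if_splits)
  show "nm (spm (swsig a b) (\<lambda>_. 1) ** A_rot \<Theta> ** transpose (spm (swsig a b) (\<lambda>_. 1)) :: 'n rmat) i j = nm (A_rot (swap_coords a b \<Theta>) :: 'n rmat) i j"
    using i j lt by (simp add: spm_conj[OF ok] nm_Arot swap_coords_sw rot_perm[OF inj pres swsig_def])
qed



lemma mm_rdistrib: "((A::real^'n^'m) + B) ** (C::real^'p^'n) = A ** C + B ** C"
  by (vector matrix_matrix_mult_def sum.distrib[symmetric] field_simps)
lemma mm_scale_r: "(A::real^'n^'m) ** (c *\<^sub>R (B::real^'p^'n)) = c *\<^sub>R (A ** B)"
  by (vector matrix_matrix_mult_def sum_distrib_left mult.left_commute)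
lemma mm_scale_l: "(c *\<^sub>R (A::real^'n^'m)) ** (B::real^'p^'n) = c *\<^sub>R (A ** B)"
  by (vector matrix_matrix_mult_def sum_distrib_left mult.assoc)
lemma conj_sum: "finite S \<Longrightarrow> (g::real^'n^'n) ** (\<Sum>k\<in>S. c k *\<^sub>R M k) ** (h::real^'n^'n) = (\<Sum>k\<in>S. c k *\<^sub>R (g ** M k ** h))"
  by (induction S rule: finite_induct) (simp_all add: matrix_add_ldistrib mm_rdistrib mm_scale_r mm_scale_l)

lemma Fsum:
  fixes i j p :: nat and t :: "nat \<Rightarrow> real"
  shows "(\<Sum>k<p. t k * ((if i = 2*k \<and> j = 2*k+1 then 1 else 0) - (if i = 2*k+1 \<and> j = 2*k then 1 else 0)))
   = (if i div 2 < p \<and> even i \<and> j = i+1 then t (i div 2)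
      else if i div 2 < p \<and> odd i \<and> i = j+1 then - t (i div 2) else (0::real))"
proof -
  define c where "c = (if even i \<and> j = i+1 then t (i div 2) else if odd i \<and> i = j+1 then - t (i div 2) else (0::real))"
  have "(\<Sum>k<p. t k * ((if i = 2*k \<and> j = 2*k+1 then 1 else 0) - (if i = 2*k+1 \<and> j = 2*k then 1 else 0)))
      = (\<Sum>k<p. if k = i div 2 then c else 0)"
  proof (rule sum.cong)
    fix k assume "k \<in> {..<p}"
    show "t k * ((if i = 2*k \<and> j = 2*k+1 then 1 else 0) - (if i = 2*k+1 \<and> j = 2*k then 1 else 0)) = (if k = i div 2 then c else 0)"
    proof (cases "k = i div 2")
      case True
      have "i = 2*k \<or> i = 2*k+1" using True by auto
      then show ?thesis using True unfolding c_def by auto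
    next
      case False
      then have "i \<noteq> 2*k" "i \<noteq> 2*k+1" by auto
      then show ?thesis using False by simp
    qed
  qed simp
  also have "\<dots> = (if i div 2 < p then c else 0)" by simp
  finally show ?thesis unfolding c_def by auto
qed

lemma swap_ok:
  assumes ab: "a < b" "b < CARD('n::enum) div 2"
  shows "spm_ok CARD('n) (swsig a b) (\<lambda>_. 1)"
proof -
  have "\<And>x::nat. x = 2*(x div 2) + x mod 2" by simp
  then show ?thesis
    unfolding spm_ok_def swsig_def sw_def using ab by auto
qed



lemma odd_ne_even[simp]: "Suc (2*x) \<noteq> 2*(y::nat)" "2*(y::nat) \<noteq> Suc (2*x)" by presburger+

theorem proposition6p2:
  fixes chi :: "('n::enum) rmat \<Rightarrow> 'n rmat"
  defines "n \<equiv> CARD('n::enum)"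
  defines "p \<equiv> CARD('n::enum) div 2"
  assumes n3: "n \<ge> 3"
    and smooth: "smooth_on_set SO_mat chi"
    and into_so: "\<forall>A\<in>SO_mat. chi A \<in> so_mat"
    and equiv: "\<forall>A\<in>SO_mat. \<forall>g\<in>SO_mat. chi (g ** A ** transpose g) = g ** chi A ** transpose g"
  shows "\<exists>\<tau> :: (nat \<Rightarrow> real) \<Rightarrow> (nat \<Rightarrow> real).
           (\<forall>\<Theta>\<in>angvecs p. \<tau> \<Theta> \<in> angvecs p)
         \<and> (\<forall>\<Theta>\<in>angvecs p. \<forall>k<p. \<tau> (\<lambda>l. if l = k then \<Theta> l + 2 * pi else \<Theta> l) = \<tau> \<Theta>)
         \<and> (\<forall>\<Theta>\<in>torus p. chi (A_rot \<Theta>) = (\<Sum>k<p. \<tau> \<Theta> k *\<^sub>R Fmat (2*k) (2*k+1)))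
         \<and> (\<forall>W\<in>weyl_group n. \<forall>\<Theta>\<in>angvecs p. \<tau> (W \<Theta>) = W (\<tau> \<Theta>))
         \<and> (\<forall>A\<in>SO_mat. \<forall>g\<in>SO_mat. \<forall>\<Theta>\<in>torus p. A = g ** A_rot \<Theta> ** transpose g \<longrightarrow>
              chi A = (\<Sum>k<p. \<tau> \<Theta> k *\<^sub>R (g ** Fmat (2*k) (2*k+1) ** transpose g)))"
proof -
  define X where "X = (\<lambda>\<Theta>. chi (A_rot \<Theta>))"
  define \<tau> where "\<tau> = (\<lambda>(\<Theta>::nat\<Rightarrow>real) k. if k < p then nm (X \<Theta>) (2*k) (2*k+1) else 0)"
  have pn: "2*p \<le> n" "n \<le> 2*p+1" unfolding n_def p_def by auto
  have SOr: "\<And>\<Theta>. (A_rot \<Theta> :: 'n rmat) \<in> SO_mat" by (rule Arot_SO)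
  have skew: "\<And>\<Theta> i j. nm (X \<Theta>) j i = - nm (X \<Theta>) i j"
  proof -
    fix \<Theta> i j
    have "transpose (X \<Theta>) = - X \<Theta>" using into_so SOr unfolding X_def so_mat_def by blast
    then have "nm (transpose (X \<Theta>)) i j = nm (- X \<Theta>) i j" by simp
    then show "nm (X \<Theta>) j i = - nm (X \<Theta>) i j" by simp
  qed
  have conjX: "\<And>g \<Theta>. g \<in> SO_mat \<Longrightarrow> chi (g ** A_rot \<Theta> ** transpose g) = g ** X \<Theta> ** transpose g"
    using equiv SOr unfolding X_def by blast
  have off: "nm (X \<Theta>) i j = 0" if ij: "i < n" "j < n" "i div 2 \<noteq> j div 2" "i div 2 < p" for \<Theta> i j
  proof -
    define k where "k = i div 2"
    define s where "s = dsg (2*k) (2*k+1)"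
    have kn: "2*k+1 < n" using ij pn k_def by linarith
    have ok: "spm_ok CARD('n) id s" unfolding spm_ok_def s_def by (simp add: dsg_sq)
    have D: "(spm id s :: 'n rmat) \<in> SO_mat" unfolding s_def
      by (rule diag_SO) (use kn n_def in auto)
    have "spm id s ** A_rot \<Theta> ** transpose (spm id s) = (A_rot \<Theta> :: 'n rmat)"
      by (rule Arot_diag[OF ok]) (auto simp: s_def dsg_sq dsg_def)
    then have "X \<Theta> = spm id s ** X \<Theta> ** transpose (spm id s)"
      using conjX[OF D, of \<Theta>] unfolding X_def by simp
    then have "nm (X \<Theta>) i j = nm (spm id s ** X \<Theta> ** transpose (spm id s)) i j" by simp
    also have "\<dots> = s i * s j * nm (X \<Theta>) i j"
      using ij n_def by (simp add: spm_conj[OF ok])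
    also have "s i * s j = -1"
    proof -
      have "i = 2*k \<or> i = 2*k+1" unfolding k_def by auto
      moreover have "j \<noteq> 2*k" "j \<noteq> 2*k+1" using ij k_def by auto
      ultimately show ?thesis unfolding s_def dsg_def by auto
    qed
    finally show ?thesis by simp
  qed
  have struct: "X \<Theta> = (\<Sum>k<p. \<tau> \<Theta> k *\<^sub>R Fmat (2*k) (2*k+1))" for \<Theta>
  proof (rule mat_eqI)
    fix i j assume i: "i < CARD('n)" and j: "j < CARD('n)"
    have "nm (\<Sum>k<p. \<tau> \<Theta> k *\<^sub>R Fmat (2*k) (2*k+1) :: 'n rmat) i j
       = (\<Sum>k<p. \<tau> \<Theta> k * ((if i = 2*k \<and> j = 2*k+1 then 1 else 0) - (if i = 2*k+1 \<and> j = 2*k then 1 else 0)))"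
      using i j by (simp add: nm_sum nm_Fmat)
    also have "\<dots> = (if i div 2 < p \<and> even i \<and> j = i+1 then \<tau> \<Theta> (i div 2)
      else if i div 2 < p \<and> odd i \<and> i = j+1 then - \<tau> \<Theta> (i div 2) else 0)"
      by (rule Fsum)
    also have "\<dots> = nm (X \<Theta>) i j"
    proof -
      have i': "i < n" and j': "j < n" using i j n_def by auto
      have d: "2 * (i div 2) = i" if "even i" using that by simp
      have d2: "2 * (i div 2) + 1 = i" if "odd i" using that by presburger
      consider (a) "i div 2 < p \<and> even i \<and> j = i+1" | (b) "i div 2 < p \<and> odd i \<and> i = j+1"
        | (c) "\<not> (i div 2 < p \<and> even i \<and> j = i+1)" "\<not> (i div 2 < p \<and> odd i \<and> i = j+1)" by blast
      then show ?thesis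
      proof cases
        case a
        have ip: "i div 2 < p" "even i" using a by blast+
        have "\<tau> \<Theta> (i div 2) = nm (X \<Theta>) i j" using ip a d unfolding \<tau>_def by simp
        then show ?thesis by (simp only: if_P[OF a])
      next
        case b
        then have "2 * (i div 2) = j" using d2 by linarith
        note jj = this
        have ip: "i div 2 < p" "odd i" using b by blast+
        have "\<tau> \<Theta> (i div 2) = nm (X \<Theta>) (2*(i div 2)) (2*(i div 2)+1)" using ip unfolding \<tau>_def by simp
        then have "\<tau> \<Theta> (i div 2) = nm (X \<Theta>) j i" using ip d2 jj by simp
        moreover have nA: "\<not> (i div 2 < p \<and> even i \<and> j = i+1)" using ip by simp
        ultimately show ?thesis
          by (simp only: if_not_P[OF nA] if_P[OF b]) (simp add: skew[of \<Theta> i j])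
      next
        case c
        have "nm (X \<Theta>) i j = 0"
        proof (cases "i = j")
          case True then show ?thesis using skew[of \<Theta> i i] by simp
        next
          case ne: False
          show ?thesis
          proof (cases "i div 2 = j div 2")
            case True
            have ei: "i = 2*(i div 2) + i mod 2" and ej: "j = 2*(j div 2) + j mod 2" by simp_all
            have mi: "i mod 2 = 0 \<or> i mod 2 = 1" and mj: "j mod 2 = 0 \<or> j mod 2 = 1" by auto
            have c1: "\<not> (i div 2 < p \<and> i mod 2 = 0 \<and> j = i+1)" "\<not> (i div 2 < p \<and> i mod 2 = 1 \<and> i = j+1)"
              using c by (simp_all add: even_iff_mod_2_eq_zero odd_iff_mod_2_eq_one)
            from mi mj have False
            proof (elim disjE)
              assume "i mod 2 = 0" "j mod 2 = 0" then show False using ei ej True ne by linarith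
            next
              assume "i mod 2 = 1" "j mod 2 = 1" then show False using ei ej True ne by linarith
            next
              assume "i mod 2 = 0" "j mod 2 = 1" then show False using ei ej True c1 i' j' pn by linarith
            next
              assume "i mod 2 = 1" "j mod 2 = 0" then show False using ei ej True c1 i' j' pn by linarith
            qed
            then show ?thesis ..
          next
            case False
            show ?thesis
            proof (cases "i div 2 < p")
              case True show ?thesis by (rule off[OF i' j' False True])
            next
              case nlt: False
              have "j div 2 < p" using nlt False i' j' pn by linarith
              then have "nm (X \<Theta>) j i = 0" using off[OF j' i'] False by metis
              then show ?thesis using skew[of \<Theta> i j] by simp
            qed
          qed
        qed
        then show ?thesis by (simp only: if_not_P[OF c(1)] if_not_P[OF c(2)])
      qed
    qed
    finally show "nm (X \<Theta>) i j = nm (\<Sum>k<p. \<tau> \<Theta> k *\<^sub>R Fmat (2*k) (2*k+1) :: 'n rmat) i j" by simp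
  qed
  have per: "\<tau> (\<lambda>l. if l = k then \<Theta> l + 2*pi else \<Theta> l) = \<tau> \<Theta>" for \<Theta> k
  proof -
    have eq: "(A_rot (\<lambda>l. if l = k then \<Theta> l + 2*pi else \<Theta> l) :: 'n rmat) = A_rot \<Theta>"
      by (rule mat_eqI) (auto simp: nm_Arot rot_entry_def Let_def)
    show ?thesis unfolding \<tau>_def X_def by (simp only: eq)
  qed
  have diagstep: "\<tau> (\<Psi> \<Theta>) k = s (2*k) * s (2*k+1) * \<tau> \<Theta> k"
    if ok: "spm_ok CARD('n) id s" and sq: "\<And>a. s a * s a = 1" and D: "(spm id s :: 'n rmat) \<in> SO_mat"
      and blk: "\<And>\<Theta> q. q < p \<Longrightarrow> (s (2*q) = s (2*q+1) \<and> \<Psi> \<Theta> q = \<Theta> q) \<or> (s (2*q) = - s (2*q+1) \<and> \<Psi> \<Theta> q = - \<Theta> q)"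
      and k: "k < p" for s \<Psi> \<Theta> k
  proof -
    have "spm id s ** A_rot \<Theta> ** transpose (spm id s) = (A_rot (\<Psi> \<Theta>) :: 'n rmat)"
      by (rule Arot_diag[OF ok sq], rule blk) (simp add: p_def)
    then have XX: "X (\<Psi> \<Theta>) = spm id s ** X \<Theta> ** transpose (spm id s)"
      using conjX[OF D, of \<Theta>] unfolding X_def by simp
    have kn: "2*k+1 < CARD('n)" "2*k < CARD('n)" using k pn n_def by linarith+
    show ?thesis unfolding \<tau>_def using k kn XX by (simp add: spm_conj[OF ok])
  qed
  have gen: "\<tau> (G \<Theta>) = G (\<tau> \<Theta>)" if G: "G \<in> weyl_gens n" for G \<Theta>
  proof -
    from G consider (sw) a b where "G = swap_coords a b" "a < b" "b < n div 2"
      | (s2) a b where "even n" "G = sign2 a b" "a < b" "b < n div 2"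
      | (s1) a where "odd n" "G = sign1 a" "a < n div 2"
      unfolding weyl_gens_def by (auto split: if_splits)
    then show ?thesis
    proof cases
      case sw
      have bp: "b < CARD('n) div 2" using sw n_def by simp
      define g where "g = (spm (swsig a b) (\<lambda>_. 1) :: 'n rmat)"
      have gSO: "g \<in> SO_mat" unfolding g_def by (rule swap_SO[OF sw(2) bp])
      have ok: "spm_ok CARD('n) (swsig a b) (\<lambda>_. 1)" by (rule swap_ok[OF sw(2) bp])
      have XX: "X (G \<Theta>) = g ** X \<Theta> ** transpose g"
        using conjX[OF gSO, of \<Theta>] Arot_swap[OF sw(2) bp, of \<Theta>] unfolding X_def g_def sw(1) by simp
      show ?thesis
      proof
        fix k
        show "\<tau> (G \<Theta>) k = G (\<tau> \<Theta>) k"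
        proof (cases "k < p")
          case True
          have kn: "2*k+1 < CARD('n)" "2*k < CARD('n)" using True pn n_def by linarith+
          have swp: "sw a b k < p" using True sw p_def n_def unfolding sw_def by auto
          have "\<tau> (G \<Theta>) k = nm (X \<Theta>) (swsig a b (2*k)) (swsig a b (2*k+1))"
            unfolding \<tau>_def using True kn XX by (simp add: g_def spm_conj[OF ok])
          also have "\<dots> = nm (X \<Theta>) (2 * sw a b k) (2 * sw a b k + 1)" by (simp add: swsig_def)
          also have "\<dots> = \<tau> \<Theta> (sw a b k)" unfolding \<tau>_def using swp by simp
          also have "\<dots> = G (\<tau> \<Theta>) k" by (simp add: sw(1) swap_coords_sw)
          finally show ?thesis .
        next
          case False
          then have "sw a b k = k" using sw p_def n_def unfolding sw_def by auto
          then show ?thesis using False unfolding \<tau>_def by (simp add: sw(1) swap_coords_sw)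
        qed
      qed
    next
      case s2
      define s where "s = dsg (2*a) (2*b)"
      have ok: "spm_ok CARD('n) id s" unfolding spm_ok_def s_def by (simp add: dsg_sq)
      have D: "(spm id s :: 'n rmat) \<in> SO_mat" unfolding s_def
        by (rule diag_SO) (use s2 pn n_def in auto)
      have sq: "\<And>x. s x * s x = 1" unfolding s_def by (rule dsg_sq)
      have blk: "(s (2*q) = s (2*q+1) \<and> sign2 a b \<Theta>' q = \<Theta>' q) \<or> (s (2*q) = - s (2*q+1) \<and> sign2 a b \<Theta>' q = - \<Theta>' q)"
        for \<Theta>' q
        unfolding s_def dsg_def sign2_def using s2 by (auto simp: odd_ne_even)
      show ?thesis
      proof
        fix k
        show "\<tau> (G \<Theta>) k = G (\<tau> \<Theta>) k"
        proof (cases "k < p")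
          case True
          have "\<tau> (G \<Theta>) k = s (2*k) * s (2*k+1) * \<tau> \<Theta> k"
            unfolding s2(2) by (rule diagstep[where \<Psi>="sign2 a b", OF ok sq D blk True])
          then show ?thesis using s2 unfolding s_def dsg_def sign2_def by (auto simp: odd_ne_even)
        next
          case False
          then show ?thesis unfolding \<tau>_def s2(2) sign2_def by simp
        qed
      qed
    next
      case s1
      define s where "s = dsg (2*a) (2*p)"
      have n2: "n = 2*p+1" using s1 unfolding n_def p_def by presburger
      have ok: "spm_ok CARD('n) id s" unfolding spm_ok_def s_def by (simp add: dsg_sq)
      have D: "(spm id s :: 'n rmat) \<in> SO_mat" unfolding s_def
        by (rule diag_SO) (use s1 n2 n_def p_def in auto)
      have sq: "\<And>x. s x * s x = 1" unfolding s_def by (rule dsg_sq)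
      have ap: "a < p" using s1 n_def p_def by simp
      have blk: "(s (2*q) = s (2*q+1) \<and> sign1 a \<Theta>' q = \<Theta>' q) \<or> (s (2*q) = - s (2*q+1) \<and> sign1 a \<Theta>' q = - \<Theta>' q)"
        if "q < p" for \<Theta>' q
        unfolding s_def dsg_def sign1_def using that ap by (auto simp: odd_ne_even)
      show ?thesis
      proof
        fix k
        show "\<tau> (G \<Theta>) k = G (\<tau> \<Theta>) k"
        proof (cases "k < p")
          case True
          have "\<tau> (G \<Theta>) k = s (2*k) * s (2*k+1) * \<tau> \<Theta> k"
            unfolding s1(2) by (rule diagstep[where \<Psi>="sign1 a", OF ok sq D blk True])
          then show ?thesis using True ap unfolding s_def dsg_def s1(2) sign1_def by (auto simp: odd_ne_even)
        next
          case False
          then show ?thesis unfolding \<tau>_def s1(2) sign1_def by simp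
        qed
      qed
    qed
  qed
  have weyl: "W \<in> weyl_group n \<Longrightarrow> \<forall>\<Theta>. \<tau> (W \<Theta>) = W (\<tau> \<Theta>)" for W
    by (induction rule: weyl_group.induct) (auto simp: gen)
  have P1: "\<forall>\<Theta>\<in>angvecs p. \<tau> \<Theta> \<in> angvecs p" unfolding angvecs_def \<tau>_def by simp
  have P2: "\<forall>\<Theta>\<in>angvecs p. \<forall>k<p. \<tau> (\<lambda>l. if l = k then \<Theta> l + 2 * pi else \<Theta> l) = \<tau> \<Theta>"
    using per by blast
  have P3: "\<forall>\<Theta>\<in>torus p. chi (A_rot \<Theta>) = (\<Sum>k<p. \<tau> \<Theta> k *\<^sub>R Fmat (2*k) (2*k+1))"
    using struct unfolding X_def by blast
  have P4: "\<forall>W\<in>weyl_group n. \<forall>\<Theta>\<in>angvecs p. \<tau> (W \<Theta>) = W (\<tau> \<Theta>)"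
    using weyl by blast
  have P5: "\<forall>A\<in>SO_mat. \<forall>g\<in>SO_mat. \<forall>\<Theta>\<in>torus p. A = g ** A_rot \<Theta> ** transpose g \<longrightarrow>
              chi A = (\<Sum>k<p. \<tau> \<Theta> k *\<^sub>R (g ** Fmat (2*k) (2*k+1) ** transpose g))"
  proof (intro ballI impI)
    fix A g :: "'n rmat" and \<Theta> assume g: "g \<in> SO_mat" and A: "A = g ** A_rot \<Theta> ** transpose g"
    have "chi A = g ** X \<Theta> ** transpose g" using conjX[OF g] A by simp
    also have "\<dots> = g ** (\<Sum>k<p. \<tau> \<Theta> k *\<^sub>R Fmat (2*k) (2*k+1)) ** transpose g" using struct by simp
    also have "\<dots> = (\<Sum>k<p. \<tau> \<Theta> k *\<^sub>R (g ** Fmat (2*k) (2*k+1) ** transpose g))" by (rule conj_sum) simp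
    finally show "chi A = (\<Sum>k<p. \<tau> \<Theta> k *\<^sub>R (g ** Fmat (2*k) (2*k+1) ** transpose g))" .
  qed
  show ?thesis
    by (rule exI[of _ \<tau>]) (intro conjI P1 P2 P3 P4 P5)
qed

end
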